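(* For every $q\ge3$ the functions $c_q$ and $s_q$ extend holomorphically to the complex strip $\Sigma_q=\{z\in\mathbb{C}:|\mathrm{Im}\,z|<\rho_{k_q}\}$, where $\rho_{k_q}=\mathrm{arcosh}(1/k_q)$. This extension is maximal: the extended functions have (ramification) singularities at the points $\frac\pi2+\pi n\pm i\rho_{k_q}$, $n\in\mathbb{Z}$.
   Context: Ellipse with semi-axes $0<b\le a$, eccentricity $e_0=\sqrt{1-b^2/a^2}$ with $0<e_0<1$. For $0\le k<1$, $F(z;k)=\int_0^z(1-k^2\sin^2\zeta)^{-1/2}d\zeta$ and $K(k)=F(\pi/2;k)$. For $\lambda\in(0,b)$, $k_\lambda=\sqrt{(a^2-b^2)/(a^2-\lambda^2)}$, $\omega_\lambda=F(\arcsin(\lambda/b);k_\lambda)/(2K(k_\lambda))$ (strictly increasing from $0$ to $1/2$); for $q\ge3$, $\lambda_q$ satisfies $\omega_{\lambda_q}=1/q$ and $k_q=k_{\lambda_q}\in(e_0,1)$. $c_q(z)=\cos\!\big(\tfrac{2\pi q}{4K(k_q)}F(z;k_q)\big)/\sqrt{1-k_q^2\sin^2z}$, $s_q(z)=\sin\!\big(\tfrac{2\pi q}{4K(k_q)}F(z;k_q)\big)/\sqrt{1-k_q^2\sin^2z}$. *)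

theory Defs
  imports "HOL-Complex_Analysis.Complex_Analysis"
begin

definition ellF :: "real \<Rightarrow> real \<Rightarrow> real" where
  "ellF k z =
     (if 0 \<le> z then integral {0..z} (\<lambda>t. 1 / sqrt (1 - k\<^sup>2 * (sin t)\<^sup>2))
      else - integral {z..0} (\<lambda>t. 1 / sqrt (1 - k\<^sup>2 * (sin t)\<^sup>2)))"

definition ellK :: "real \<Rightarrow> real" where
  "ellK k = ellF k (pi / 2)"

text \<open>k_lambda and omega_lambda for the ellipse with semi-axes a, b.\<close>
definition k_lam :: "real \<Rightarrow> real \<Rightarrow> real \<Rightarrow> real" where
  "k_lam a b lam = sqrt ((a\<^sup>2 - b\<^sup>2) / (a\<^sup>2 - lam\<^sup>2))"

definition omega :: "real \<Rightarrow> real \<Rightarrow> real \<Rightarrow> real" where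
  "omega a b lam = ellF (k_lam a b lam) (arcsin (lam / b)) / (2 * ellK (k_lam a b lam))"

definition cq :: "real \<Rightarrow> nat \<Rightarrow> real \<Rightarrow> real" where
  "cq k q z = cos (2 * pi * real q / (4 * ellK k) * ellF k z) / sqrt (1 - k\<^sup>2 * (sin z)\<^sup>2)"

definition sq :: "real \<Rightarrow> nat \<Rightarrow> real \<Rightarrow> real" where
  "sq k q z = sin (2 * pi * real q / (4 * ellK k) * ellF k z) / sqrt (1 - k\<^sup>2 * (sin z)\<^sup>2)"

definition rho :: "real \<Rightarrow> real" where
  "rho k = arcosh (1 / k)"

definition strip :: "real \<Rightarrow> complex set" where
  "strip r = {z. \<bar>Im z\<bar> < r}"

end

theory Submission
  imports Defs
begin


definition vv :: "real \<Rightarrow> complex \<Rightarrow> complex" where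
  "vv k z = 1 - (complex_of_real k)\<^sup>2 * (sin z)\<^sup>2"

lemma cosh_lt_rho:
  fixes k y :: real
  assumes "0 < k" "k < 1" "\<bar>y\<bar> < arcosh (1/k)"
  shows "cosh y < 1/k"
proof -
  have "1 \<le> 1/k" using assms by simp
  have "cosh \<bar>y\<bar> < cosh (arcosh (1/k))"
    using assms by (intro cosh_real_strict_mono) auto
  then show ?thesis using \<open>1 \<le> 1/k\<close> by simp
qed

lemma vv_strip:
  assumes "0 < k" "k < 1" "\<bar>Im z\<bar> < arcosh (1/k)"
  shows "vv k z \<notin> \<real>\<^sub>\<le>\<^sub>0"
proof
  assume H: "vv k z \<in> \<real>\<^sub>\<le>\<^sub>0"
  define a where "a = Re (sin z)"
  define b where "b = Im (sin z)"
  have a: "a = sin (Re z) * cosh (Im z)" unfolding a_def Re_sin cosh_def by simp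
  have b: "b = cos (Re z) * sinh (Im z)" unfolding b_def Im_sin sinh_def by simp
  have sz: "sin z = Complex a b" unfolding a_def b_def by simp
  have "Im (vv k z) = - k\<^sup>2 * (2*a*b)" unfolding vv_def sz by (simp add: power2_eq_square)
  moreover have "Re (vv k z) = 1 - k\<^sup>2 * (a\<^sup>2 - b\<^sup>2)" unfolding vv_def sz by (simp add: power2_eq_square)
  moreover have "Im (vv k z) = 0" "Re (vv k z) \<le> 0" using H by (auto simp: complex_nonpos_Reals_iff)
  ultimately have ab: "a * b = 0" and le: "1 - k\<^sup>2 * (a\<^sup>2 - b\<^sup>2) \<le> 0" using assms by auto
  show False
  proof (cases "a = 0")
    case True
    have "0 \<le> k\<^sup>2 * b\<^sup>2" by simp
    moreover have "1 + k\<^sup>2 * b\<^sup>2 \<le> 0" using le True by (simp add: algebra_simps)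
    ultimately show ?thesis by linarith
  next
    case False
    then have "b = 0" using ab by simp
    have c: "cosh (Im z) < 1/k" using cosh_lt_rho assms by blast
    have "0 < cosh (Im z)" by simp
    have "\<bar>a\<bar> \<le> cosh (Im z)" unfolding a abs_mult using abs_sin_le_one[of "Re z"]
      by (simp add: mult_left_le_one_le)
    then have "\<bar>a\<bar> < 1/k" using c by linarith
    then have "k * \<bar>a\<bar> < 1" using assms by (simp add: field_simps)
    then have "(k * \<bar>a\<bar>)\<^sup>2 < 1" using assms by (simp add: abs_square_less_1)
    then have "k\<^sup>2 * a\<^sup>2 < 1" by (simp add: power_mult_distrib)
    then show ?thesis using le \<open>b = 0\<close> by (simp add: algebra_simps)
  qed
qed



lemma open_strip: "open (strip r)"
  unfolding strip_def by (intro open_Collect_less continuous_intros)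

lemma convex_strip: "convex (strip r)"
proof -
  have "strip r = Im -` {-r<..<r}" unfolding strip_def by auto
  moreover have "convex (Im -` {-r<..<r})"
    by (rule convex_linear_vimage) (auto intro: bounded_linear.linear bounded_linear_Im)
  ultimately show ?thesis by simp
qed

lemma vv_nonzero: "vv k z \<notin> \<real>\<^sub>\<le>\<^sub>0 \<Longrightarrow> csqrt (vv k z) \<noteq> 0"
  by auto

lemma holo_vv: "vv k holomorphic_on S"
  unfolding vv_def by (intro holomorphic_intros)

lemma holo_integrand:
  assumes "0 < k" "k < 1"
  shows "(\<lambda>z. 1 / csqrt (vv k z)) holomorphic_on strip (arcosh (1/k))"
proof -
  have nz: "vv k z \<notin> \<real>\<^sub>\<le>\<^sub>0" if "z \<in> strip (arcosh (1/k))" for z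
    using vv_strip[OF assms] that by (auto simp: strip_def)
  have nz': "csqrt (vv k z) \<noteq> 0" if "z \<in> strip (arcosh (1/k))" for z
    using nz[OF that] by (metis csqrt_eq_0 nonpos_Reals_zero_I)
  show ?thesis
    by (intro holomorphic_intros holo_vv) (use nz nz' in auto)
qed

lemma primitive_exists:
  assumes "0 < k" "k < 1"
  obtains F where "\<And>z. z \<in> strip (arcosh (1/k)) \<Longrightarrow> (F has_field_derivative 1 / csqrt (vv k z)) (at z)"
    and "F 0 = 0"
proof -
  obtain g where g: "\<And>z. z \<in> strip (arcosh (1/k)) \<Longrightarrow> (g has_field_derivative 1 / csqrt (vv k z)) (at z within strip (arcosh (1/k)))"
    using holomorphic_convex_primitive'[OF convex_strip open_strip holo_integrand[OF assms]] by blast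
  have "((\<lambda>z. g z - g 0) has_field_derivative 1 / csqrt (vv k z)) (at z)" if "z \<in> strip (arcosh (1/k))" for z
    using g[OF that] at_within_open[OF that open_strip] by (auto intro!: derivative_eq_intros)
  then show ?thesis using that[of "\<lambda>z. g z - g 0"] by auto
qed

lemma vv_real: "vv k (complex_of_real t) = complex_of_real (1 - k\<^sup>2 * (sin t)\<^sup>2)"
  unfolding vv_def by (simp add: sin_of_real)

lemma integrand_real:
  assumes "0 < k" "k < 1"
  shows "1 / csqrt (vv k (complex_of_real t)) = complex_of_real (1 / sqrt (1 - k\<^sup>2 * (sin t)\<^sup>2))"
    and "0 < 1 - k\<^sup>2 * (sin t)\<^sup>2"
proof -
  have "k\<^sup>2 * (sin t)\<^sup>2 \<le> k\<^sup>2 * 1" using assms by (intro mult_left_mono) (auto simp: abs_square_le_1)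
  moreover have "k\<^sup>2 < 1" using assms by (simp add: power_less_one_iff)
  ultimately show pos: "0 < 1 - k\<^sup>2 * (sin t)\<^sup>2" by simp
  show "1 / csqrt (vv k (complex_of_real t)) = complex_of_real (1 / sqrt (1 - k\<^sup>2 * (sin t)\<^sup>2))"
    unfolding vv_real using pos by simp
qed

lemma real_in_strip: "0 < r \<Longrightarrow> complex_of_real t \<in> strip r"
  by (simp add: strip_def)

lemma F_real:
  assumes "0 < k" "k < 1"
    and F: "\<And>z. z \<in> strip (arcosh (1/k)) \<Longrightarrow> (F has_field_derivative 1 / csqrt (vv k z)) (at z)"
    and F0: "F 0 = 0"
  shows "F (complex_of_real x) = complex_of_real (ellF k x)"
proof -
  define h where "h t = 1 / sqrt (1 - k\<^sup>2 * (sin t)\<^sup>2)" for t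
  have rpos: "0 < arcosh (1/k)" using assms by simp
  have D: "((\<lambda>t. F (complex_of_real t)) has_vector_derivative complex_of_real (h t)) (at t within X)" for t X
    using has_vector_derivative_real_field[OF F[OF real_in_strip[OF rpos]]]
    unfolding integrand_real[OF assms(1,2)] h_def by blast
  have contf: "continuous_on X h" for X
  proof -
    have "sqrt (1 - k\<^sup>2 * (sin t)\<^sup>2) \<noteq> 0" for t
      using integrand_real(2)[OF assms(1,2), of t] by simp
    then show ?thesis unfolding h_def by (intro continuous_intros) auto
  qed
  have key: "((\<lambda>t. complex_of_real (h t)) has_integral (F b - F a)) {a..b}" if "a \<le> b" for a b
    by (rule fundamental_theorem_of_calculus[OF that D])
  have hi: "(h has_integral integral {a..b} h) {a..b}" for a b
    using integrable_continuous_interval[OF contf] by blast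
  show ?thesis
  proof (cases "0 \<le> x")
    case True
    from has_integral_Re[OF key[OF True]] has_integral_Im[OF key[OF True]]
    have "(h has_integral Re (F x)) {0..x}" "((\<lambda>_. 0) has_integral Im (F x)) {0..x}"
      by (simp_all add: F0)
    then have "Re (F x) = integral {0..x} h" "Im (F x) = 0"
      using hi[of 0 x] has_integral_unique has_integral_0 by blast+
    then show ?thesis using True unfolding ellF_def h_def by (simp add: complex_eq_iff)
  next
    case False
    then have xl: "x \<le> 0" by simp
    from has_integral_Re[OF key[OF xl]] has_integral_Im[OF key[OF xl]]
    have "(h has_integral - Re (F x)) {x..0}" "((\<lambda>_. 0) has_integral - Im (F x)) {x..0}"
      by (simp_all add: F0)
    then have "- Re (F x) = integral {x..0} h" "- Im (F x) = 0"
      using hi[of x 0] has_integral_unique has_integral_0 by blast+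
    then show ?thesis using False unfolding ellF_def h_def by (simp add: complex_eq_iff)
  qed
qed



lemma sin_xp:
  fixes n :: int
  shows "cos (pi/2 + pi * real_of_int n) = 0" "(sin (pi/2 + pi * real_of_int n))\<^sup>2 = 1"
proof -
  have "pi/2 + pi * real_of_int n = real_of_int (2*n+1) * (pi/2)" by (simp add: algebra_simps)
  then show c: "cos (pi/2 + pi * real_of_int n) = 0" unfolding cos_zero_iff_int
    by (intro exI[of _ "2*n+1"]) auto
  show "(sin (pi/2 + pi * real_of_int n))\<^sup>2 = 1" using sin_cos_squared_add[of "pi/2 + pi * real_of_int n"] c by simp
qed

lemma vv_vert:
  fixes n :: int and k t :: real
  shows "vv k (complex_of_real (pi/2 + pi * real_of_int n) + \<i> * complex_of_real t) = complex_of_real (1 - k\<^sup>2 * (cosh t)\<^sup>2)"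
proof -
  define z where "z = complex_of_real (pi/2 + pi * real_of_int n) + \<i> * complex_of_real t"
  have "sin z = complex_of_real (sin (pi/2 + pi * real_of_int n) * cosh t)"
    by (simp add: complex_eq_iff Re_sin Im_sin z_def sin_xp cosh_def)
  then have "(sin z)\<^sup>2 = complex_of_real ((sin (pi/2 + pi * real_of_int n) * cosh t)\<^sup>2)"
    by simp
  also have "\<dots> = complex_of_real ((cosh t)\<^sup>2)"
    by (simp only: power_mult_distrib sin_xp mult_1)
  finally have "(sin z)\<^sup>2 = complex_of_real ((cosh t)\<^sup>2)" .
  then show ?thesis unfolding z_def[symmetric] vv_def by simp
qed

lemma vert_pos:
  fixes k t :: real
  assumes "0 < k" "k < 1" "\<bar>t\<bar> < arcosh (1/k)"
  shows "0 < 1 - k\<^sup>2 * (cosh t)\<^sup>2"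
proof -
  have "cosh t < 1/k" using cosh_lt_rho[OF assms] .
  then have "k * cosh t < 1" using assms by (simp add: field_simps)
  moreover have "0 \<le> k * cosh t" using assms by simp
  ultimately have "(k * cosh t)\<^sup>2 < 1" by (simp add: abs_square_less_1)
  then show ?thesis by (simp add: power_mult_distrib)
qed

lemma vert_deriv:
  fixes n :: int and k t :: real
  assumes "0 < k" "k < 1" "\<bar>t\<bar> < arcosh (1/k)"
    and F: "\<And>z. z \<in> strip (arcosh (1/k)) \<Longrightarrow> (F has_field_derivative 1 / csqrt (vv k z)) (at z)"
  shows "((\<lambda>t. Im (F (complex_of_real (pi/2 + pi * real_of_int n) + \<i> * complex_of_real t))) has_real_derivative
          1 / sqrt (1 - k\<^sup>2 * (cosh t)\<^sup>2)) (at t)"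
proof -
  define c where "c = complex_of_real (pi/2 + pi * real_of_int n)"
  have ins: "c + \<i> * complex_of_real t \<in> strip (arcosh (1/k))"
    using assms(3) by (simp add: strip_def c_def)
  have pos: "0 < 1 - k\<^sup>2 * (cosh t)\<^sup>2" using vert_pos assms by blast
  have val: "1 / csqrt (vv k (c + \<i> * complex_of_real t)) = complex_of_real (1 / sqrt (1 - k\<^sup>2 * (cosh t)\<^sup>2))"
    unfolding c_def vv_vert using pos by simp
  have "((\<lambda>w. F (c + \<i> * w)) has_field_derivative
          (1 / csqrt (vv k (c + \<i> * complex_of_real t))) * \<i>) (at (complex_of_real t))"
  proof -
    have g: "((\<lambda>w. c + \<i> * w) has_field_derivative \<i>) (at (complex_of_real t))"
      by (auto intro!: derivative_eq_intros)
    show ?thesis using DERIV_chain2[OF _ g, OF F[OF ins]] by simp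
  qed
  from has_vector_derivative_real_field[OF this[unfolded val]]
  have "((\<lambda>t. F (c + \<i> * complex_of_real t)) has_vector_derivative
          complex_of_real (1 / sqrt (1 - k\<^sup>2 * (cosh t)\<^sup>2)) * \<i>) (at t)" by simp
  from has_field_derivative_Im[OF this]
  show ?thesis unfolding c_def by simp
qed

lemma vert_bound:
  fixes n :: int and \<sigma> :: real
  assumes "0 < k" "k < 1" "\<sigma> = 1 \<or> \<sigma> = -1"
    and F: "\<And>z. z \<in> strip (arcosh (1/k)) \<Longrightarrow> (F has_field_derivative 1 / csqrt (vv k z)) (at z)"
    and Freal: "\<And>x. Im (F (complex_of_real x)) = 0"
  obtains c where "0 < c" "\<And>t. arcosh (1/k) / 2 \<le> t \<Longrightarrow> t < arcosh (1/k) \<Longrightarrow>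
      c \<le> \<sigma> * Im (F (complex_of_real (pi/2 + pi * real_of_int n) + \<i> * complex_of_real (\<sigma> * t)))"
proof -
  define \<rho> where "\<rho> = arcosh (1/k)"
  have rpos: "0 < \<rho>" using assms unfolding \<rho>_def by simp
  define \<psi> where "\<psi> t = Im (F (complex_of_real (pi/2 + pi * real_of_int n) + \<i> * complex_of_real t))" for t
  have D: "\<And>t. \<bar>t\<bar> < \<rho> \<Longrightarrow> (\<psi> has_real_derivative 1 / sqrt (1 - k\<^sup>2 * (cosh t)\<^sup>2)) (at t)"
    unfolding \<psi>_def \<rho>_def using vert_deriv[OF assms(1,2) _ F] by blast
  have Dp: "\<And>t. \<bar>t\<bar> < \<rho> \<Longrightarrow> 0 < 1 / sqrt (1 - k\<^sup>2 * (cosh t)\<^sup>2)"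
    unfolding \<rho>_def using vert_pos[OF assms(1,2)] by simp
  have psi0: "\<psi> 0 = 0" unfolding \<psi>_def using Freal[of "pi/2 + pi * real_of_int n"] by simp
  have inc: "\<psi> a < \<psi> b" if "-\<rho> < a" "a < b" "b < \<rho>" for a b
    by (rule DERIV_pos_imp_increasing[OF \<open>a < b\<close>]) (use that D Dp in \<open>force\<close>)
  have incle: "\<psi> a \<le> \<psi> b" if "-\<rho> < a" "a \<le> b" "b < \<rho>" for a b
    using inc[of a b] that by (cases "a = b") auto
  show ?thesis
  proof (rule that[of "\<sigma> * \<psi> (\<sigma> * \<rho> / 2)"])
    show "0 < \<sigma> * \<psi> (\<sigma> * \<rho> / 2)"
      using assms(3) inc[of 0 "\<rho>/2"] inc[of "-\<rho>/2" 0] rpos psi0 by auto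
    fix t assume t: "arcosh (1/k) / 2 \<le> t" "t < arcosh (1/k)"
    then show "\<sigma> * \<psi> (\<sigma> * \<rho> / 2) \<le> \<sigma> * Im (F (complex_of_real (pi/2 + pi * real_of_int n) + \<i> * complex_of_real (\<sigma> * t)))"
      using assms(3) incle[of "\<rho>/2" t] incle[of "-t" "-\<rho>/2"] rpos unfolding \<psi>_def[symmetric] \<rho>_def[symmetric]
      by auto
  qed
qed



lemma local_factor:
  fixes k \<sigma> :: real and n :: int and p :: complex
  assumes k: "0 < k" "k < 1" and sg: "\<sigma> = 1 \<or> \<sigma> = -1"
    and p: "p = complex_of_real (pi/2 + pi * real_of_int n) + \<i> * complex_of_real (\<sigma> * arcosh (1/k))"
  obtains V where "V holomorphic_on UNIV" "V 0 \<noteq> 0" "\<And>w. vv k (p + w\<^sup>2) = w\<^sup>2 * V w"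
proof -
  have ch: "cosh (\<sigma> * arcosh (1/k)) = 1/k"
    using sg k by auto
  have vp: "vv k p = 0" unfolding p vv_vert ch using k by (simp add: power_divide)
  then have "1 - (complex_of_real k)\<^sup>2 * (sin p)\<^sup>2 = 0" unfolding vv_def .
  then have s2: "(sin p)\<^sup>2 = 1 / (complex_of_real k)\<^sup>2" using k by (simp add: field_simps)
  have kne: "(complex_of_real k)\<^sup>2 \<noteq> 1"
  proof
    assume "(complex_of_real k)\<^sup>2 = 1"
    then have "complex_of_real (k\<^sup>2) = complex_of_real 1" by simp
    then have "k\<^sup>2 = 1" using of_real_eq_iff by blast
    moreover have "k\<^sup>2 < 1" using k by (simp add: power_less_one_iff)
    ultimately show False by simp
  qed
  have sp: "sin p \<noteq> 0" using s2 k by auto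
  have cp: "cos p \<noteq> 0"
  proof
    assume "cos p = 0"
    then have "(sin p)\<^sup>2 = 1" using sin_cos_squared_add[of p] by simp
    then show False using s2 kne k by (simp add: field_simps)
  qed
  define D where "D = - ((complex_of_real k)\<^sup>2 * (2 * sin p * cos p))"
  have Dne: "D \<noteq> 0" unfolding D_def using sp cp k by simp
  have dv: "((\<lambda>\<zeta>. vv k (p + \<zeta>)) has_field_derivative D) (at 0)"
    unfolding vv_def D_def by (auto intro!: derivative_eq_intros simp: power2_eq_square)
  define Vg where "Vg = (\<lambda>z. if z = 0 then deriv (\<lambda>\<zeta>. vv k (p + \<zeta>)) 0 else (vv k (p + z) - vv k (p + 0)) / (z - 0))"
  have hVg: "Vg holomorphic_on UNIV" unfolding Vg_def
    by (rule pole_lemma) (auto simp: vv_def intro!: holomorphic_intros)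
  have Vg0: "Vg 0 = D" unfolding Vg_def using DERIV_imp_deriv[OF dv] by simp
  show ?thesis
  proof (rule that[of "\<lambda>w. Vg (w\<^sup>2)"])
    show "(\<lambda>w. Vg (w\<^sup>2)) holomorphic_on UNIV"
    proof -
      have 1: "(\<lambda>w::complex. w\<^sup>2) holomorphic_on UNIV" by (intro holomorphic_intros)
      have 2: "Vg holomorphic_on ((\<lambda>w::complex. w\<^sup>2) ` UNIV)" using holomorphic_on_subset[OF hVg] by blast
      show ?thesis using holomorphic_on_compose[OF 1 2] by (simp add: o_def)
    qed
    show "Vg (0\<^sup>2) \<noteq> 0" using Vg0 Dne by simp
    fix w :: complex
    show "vv k (p + w\<^sup>2) = w\<^sup>2 * Vg (w\<^sup>2)"
      by (cases "w = 0") (auto simp: Vg_def vp)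
  qed
qed



lemma singular:
  fixes k \<sigma> \<alpha> :: real and n :: int and p :: complex and T F h :: "complex \<Rightarrow> complex" and r :: real
  assumes k: "0 < k" "k < 1" and sg: "\<sigma> = 1 \<or> \<sigma> = -1" and al: "\<alpha> \<noteq> 0"
    and T: "T holomorphic_on UNIV" and Tz: "\<And>z. T z = 0 \<Longrightarrow> Im z = 0"
    and F: "\<And>z. z \<in> strip (arcosh (1/k)) \<Longrightarrow> (F has_field_derivative 1 / csqrt (vv k z)) (at z)"
    and Freal: "\<And>x. Im (F (complex_of_real x)) = 0"
    and p: "p = complex_of_real (pi/2 + pi * real_of_int n) + \<i> * complex_of_real (\<sigma> * arcosh (1/k))"
    and r: "0 < r" and h: "h holomorphic_on (ball p r - {p})"
    and hf: "\<And>z. z \<in> ball p r \<inter> strip (arcosh (1/k)) \<Longrightarrow> h z = T (complex_of_real \<alpha> * F z) / csqrt (vv k z)"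
  shows False
proof -
  define \<rho> where "\<rho> = arcosh (1/k)"
  have rpos: "0 < \<rho>" using k unfolding \<rho>_def by simp
  obtain V where V: "V holomorphic_on UNIV" "V 0 \<noteq> 0" "\<And>w. vv k (p + w\<^sup>2) = w\<^sup>2 * V w"
    using local_factor[OF k sg p] by blast
  have "continuous (at 0) V" by (rule field_differentiable_imp_continuous_at[OF holomorphic_on_imp_differentiable_at[OF V(1) open_UNIV]]) simp
  then obtain \<delta>0 where d0: "\<delta>0 > 0" "\<And>w. dist 0 w < \<delta>0 \<Longrightarrow> V w \<noteq> 0"
    using continuous_at_avoid[of 0 V 0] V(2) by blast
  define \<delta> where "\<delta> = min \<delta>0 (min (sqrt r) (sqrt \<rho>))"
  have dpos: "0 < \<delta>" unfolding \<delta>_def using d0 r rpos by simp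
  define E where "E = ball (0::complex) \<delta>"
  have VE: "V w \<noteq> 0" if "w \<in> E" for w using d0 that unfolding E_def \<delta>_def by auto
  have nsq: "norm w ^ 2 < r \<and> norm w ^ 2 < \<rho>" if "w \<in> E" for w
  proof -
    have "norm w < sqrt r" "norm w < sqrt \<rho>" using that unfolding E_def \<delta>_def by auto
    then show ?thesis using r rpos by (metis norm_ge_zero real_sqrt_less_iff real_sqrt_pow2 real_sqrt_power) 
  qed
  have Eopen: "open E" and Econv: "convex E" unfolding E_def by auto
  obtain L where L: "L holomorphic_on E" "\<And>w. w \<in> E \<Longrightarrow> exp (L w) = V w"
    using holomorphic_logarithm_exists[OF Econv Eopen holomorphic_on_subset[OF V(1)] VE, of 0]
      dpos unfolding E_def by auto
  define S where "S w = exp (L w / 2)" for w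
  have S2: "(S w)\<^sup>2 = V w" if "w \<in> E" for w
    unfolding S_def using L(2)[OF that] by (simp add: power2_eq_square exp_add[symmetric])
  have Snz: "S w \<noteq> 0" for w unfolding S_def by simp
  have Shol: "S holomorphic_on E" unfolding S_def by (intro holomorphic_intros L(1)) auto
  define W where "W = {w\<in>E. 0 < Re w \<and> \<sigma> * Im w < 0}"
  have Wsub: "W \<subseteq> E" unfolding W_def by auto
  have Wopen: "open W"
  proof -
    have "W = E \<inter> {w. 0 < Re w} \<inter> {w. \<sigma> * Im w < 0}" unfolding W_def by auto
    moreover have "open {w::complex. 0 < Re w}" by (intro open_Collect_less continuous_intros)
    moreover have "open {w::complex. \<sigma> * Im w < 0}" by (intro open_Collect_less continuous_intros)
    ultimately show ?thesis using Eopen by auto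
  qed
  have Wconv: "convex W"
  proof -
    have "W = E \<inter> (Re -` {0<..}) \<inter> ((\<lambda>w. \<sigma> * Im w) -` {..<0})" unfolding W_def by auto
    moreover have "convex (Re -` {0<..})"
      by (rule convex_linear_vimage) (auto intro: bounded_linear.linear bounded_linear_Re)
    moreover have "convex ((\<lambda>w. \<sigma> * Im w) -` {..<0})"
      by (rule convex_linear_vimage) (auto intro!: bounded_linear.linear bounded_linear_mult_right bounded_linear_Im
           bounded_linear_compose[of "\<lambda>x. \<sigma> * x" Im])
    ultimately show ?thesis using Econv by (metis convex_Int)
  qed
  have Wmap: "p + w\<^sup>2 \<in> ball p r \<inter> strip \<rho> \<and> p + w\<^sup>2 \<noteq> p" if "w \<in> W" for w
  proof -
    have wE: "w \<in> E" and re: "0 < Re w" and im: "\<sigma> * Im w < 0" using that unfolding W_def by auto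
    have n2: "norm w ^ 2 < r" "norm w ^ 2 < \<rho>" using nsq[OF wE] by auto
    have "w \<noteq> 0" using re by auto
    then have "w\<^sup>2 \<noteq> 0" by simp
    moreover have "dist p (p + w\<^sup>2) < r" using n2 by (simp add: dist_norm norm_power)
    moreover have "\<bar>Im (p + w\<^sup>2)\<bar> < \<rho>"
    proof -
      have iw: "Im (w\<^sup>2) = 2 * Re w * Im w" by (simp add: power2_eq_square)
      have "\<bar>2 * Re w * Im w\<bar> \<le> (Re w)\<^sup>2 + (Im w)\<^sup>2"
        using sum_squares_bound[of "Re w" "Im w"] sum_squares_bound[of "Re w" "- Im w"]
        by (simp add: abs_le_iff)
      also have "\<dots> = (norm w)\<^sup>2" by (simp add: cmod_power2)
      finally have b: "\<bar>2 * Re w * Im w\<bar> < \<rho>" using n2 by linarith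
      have ip: "Im p = \<sigma> * \<rho>" unfolding p \<rho>_def by simp
      have "\<sigma> * (2 * Re w * Im w) < 0" using mult_neg_pos[OF im re] by (simp add: ac_simps)
      moreover have "Im (p + w\<^sup>2) = \<sigma> * \<rho> + 2 * Re w * Im w" using iw ip by simp
      moreover have gen: "\<bar>\<sigma> * \<rho> + x\<bar> < \<rho>" if "\<sigma> * x < 0" "\<bar>x\<bar> < \<rho>" for x
        using sg that by (auto simp: abs_less_iff)
      ultimately show ?thesis using b by metis
    qed
    ultimately show ?thesis by (simp add: strip_def)
  qed
  have vvW: "vv k (p + w\<^sup>2) \<notin> \<real>\<^sub>\<le>\<^sub>0" if "w \<in> W" for w
    using vv_strip[OF k] Wmap[OF that] unfolding strip_def \<rho>_def by auto
  have wnz: "w \<noteq> 0" if "w \<in> W" for w using that unfolding W_def by auto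
  define w0 where "w0 = complex_of_real (\<delta>/4) * (1 - \<i> * complex_of_real \<sigma>)"
  have w0W: "w0 \<in> W"
  proof -
    have "norm w0 = \<delta>/4 * norm (1 - \<i> * complex_of_real \<sigma>)" unfolding w0_def norm_mult using dpos by simp
    also have "norm (1 - \<i> * complex_of_real \<sigma>) = sqrt 2" using sg by (auto simp: cmod_def)
    finally have "norm w0 = \<delta>/4 * sqrt 2" .
    moreover have "sqrt 2 < (2::real)" using real_sqrt_less_mono[of 2 4] real_sqrt_four by linarith
    moreover have "\<delta> * sqrt 2 < \<delta> * 2" using dpos \<open>sqrt 2 < 2\<close> by simp
    ultimately have "norm w0 < \<delta>" using dpos by linarith
    moreover have "0 < Re w0" "\<sigma> * Im w0 < 0" unfolding w0_def using dpos sg by auto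
    ultimately show ?thesis unfolding W_def E_def by simp
  qed
  define q where "q w = csqrt (vv k (p + w\<^sup>2)) / (w * S w)" for w
  have q2: "(q w)\<^sup>2 = 1" if "w \<in> W" for w
  proof -
    have "(q w)\<^sup>2 = vv k (p + w\<^sup>2) / (w\<^sup>2 * (S w)\<^sup>2)" unfolding q_def by (simp add: power_divide power_mult_distrib)
    also have "\<dots> = 1" unfolding V(3) S2[OF Wsub[THEN subsetD, OF that]] using wnz[OF that] VE Wsub that by auto
    finally show ?thesis .
  qed
  have hvvc: "(\<lambda>z. vv k (p + z\<^sup>2)) holomorphic_on X" for X
    unfolding vv_def by (intro holomorphic_intros)
  have qhol: "q holomorphic_on W"
    unfolding q_def using vvW wnz Snz
    by (intro holomorphic_intros holomorphic_on_subset[OF Shol Wsub] hvvc) auto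
  have "q constant_on W"
  proof (rule continuous_discrete_range_constant)
    show "connected W" using Wconv by (simp add: convex_connected)
    show "continuous_on W q" using qhol by (simp add: holomorphic_on_imp_continuous_on)
    fix x assume x: "x \<in> W"
    show "\<exists>e>0. \<forall>y. y \<in> W \<and> q y \<noteq> q x \<longrightarrow> e \<le> norm (q y - q x)"
    proof (intro exI[of _ 1] conjI allI impI)
      fix y assume y: "y \<in> W \<and> q y \<noteq> q x"
      have "q x = 1 \<or> q x = -1" "q y = 1 \<or> q y = -1" using q2 x y by (auto simp: power2_eq_1_iff)
      then show "1 \<le> norm (q y - q x)" using y by auto
    qed simp
  qed
  then obtain \<epsilon> where eps: "\<And>w. w \<in> W \<Longrightarrow> q w = \<epsilon>" unfolding constant_on_def by blast
  have epsnz: "\<epsilon> \<noteq> 0" using q2[OF w0W] eps[OF w0W] by auto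
  have csq: "csqrt (vv k (p + w\<^sup>2)) = \<epsilon> * (w * S w)" if "w \<in> W" for w
    using eps[OF that] wnz[OF that] Snz unfolding q_def by (auto simp: field_simps)
  have hol2: "(\<lambda>w. 2 / (\<epsilon> * S w)) holomorphic_on E"
    using epsnz Snz by (intro holomorphic_intros Shol) auto
  obtain G where G: "\<And>w. w \<in> E \<Longrightarrow> (G has_field_derivative 2 / (\<epsilon> * S w)) (at w within E)"
    using holomorphic_convex_primitive'[OF Econv Eopen hol2] by blast
  have G': "(G has_field_derivative 2 / (\<epsilon> * S w)) (at w)" if "w \<in> E" for w
    using G[OF that] at_within_open[OF that Eopen] by simp
  have A': "((\<lambda>w. F (p + w\<^sup>2)) has_field_derivative 2 / (\<epsilon> * S w)) (at w)" if "w \<in> W" for w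
  proof -
    have g: "((\<lambda>w. p + w\<^sup>2) has_field_derivative 2 * w) (at w)"
      by (auto intro!: derivative_eq_intros)
    have ins: "p + w\<^sup>2 \<in> strip (arcosh (1/k))" using Wmap[OF that] unfolding \<rho>_def by auto
    have "((\<lambda>w. F (p + w\<^sup>2)) has_field_derivative 1 / csqrt (vv k (p + w\<^sup>2)) * (2 * w)) (at w)"
      using DERIV_chain2[OF _ g, OF F[OF ins]] by simp
    moreover have "1 / csqrt (vv k (p + w\<^sup>2)) * (2 * w) = 2 / (\<epsilon> * S w)"
      unfolding csq[OF that] using wnz[OF that] Snz epsnz by (simp add: field_simps)
    ultimately show ?thesis by simp
  qed
  have "\<exists>c. \<forall>w\<in>W. F (p + w\<^sup>2) - G w = c"
  proof (rule has_field_derivative_zero_constant[OF Wconv])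
    fix w assume w: "w \<in> W"
    have "((\<lambda>w. F (p + w\<^sup>2) - G w) has_field_derivative 2 / (\<epsilon> * S w) - 2 / (\<epsilon> * S w)) (at w)"
      by (intro DERIV_diff A'[OF w] G'[OF Wsub[THEN subsetD, OF w]])
    then show "((\<lambda>w. F (p + w\<^sup>2) - G w) has_field_derivative 0) (at w within W)"
      by (simp add: has_field_derivative_at_within)
  qed
  then obtain c0 where c0: "\<And>w. w \<in> W \<Longrightarrow> F (p + w\<^sup>2) - G w = c0" by blast
  define Fh where "Fh w = G w + c0" for w
  have FhW: "Fh w = F (p + w\<^sup>2)" if "w \<in> W" for w using c0[OF that] unfolding Fh_def by (simp add: algebra_simps)
  have Fhhol: "Fh holomorphic_on E"
    unfolding holomorphic_on_open[OF Eopen] Fh_def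
  proof
    fix w assume "w \<in> E"
    from DERIV_add[OF G'[OF this] DERIV_const[of c0]]
    show "\<exists>f'. ((\<lambda>w. G w + c0) has_field_derivative f') (at w)" by blast
  qed
  define hh where "hh w = T (complex_of_real \<alpha> * Fh w) / (\<epsilon> * w * S w)" for w
  have hhhol: "hh holomorphic_on (E - {0})"
  proof -
    have "(\<lambda>w. T (complex_of_real \<alpha> * Fh w)) holomorphic_on (E - {0})"
    proof -
      have "(\<lambda>w. complex_of_real \<alpha> * Fh w) holomorphic_on (E - {0})"
        by (intro holomorphic_intros holomorphic_on_subset[OF Fhhol]) auto
      from holomorphic_on_compose_gen[OF this T] show ?thesis by (simp add: o_def)
    qed
    then show ?thesis unfolding hh_def using epsnz Snz
      by (intro holomorphic_intros holomorphic_on_subset[OF Shol]) auto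
  qed
  have Phi_in: "p + w\<^sup>2 \<in> ball p r - {p}" if "w \<in> E - {0}" for w
  proof -
    have "norm w ^ 2 < r" using nsq[of w] that by blast
    then have "dist p (p + w\<^sup>2) < r" by (simp add: dist_norm norm_power)
    moreover have "w\<^sup>2 \<noteq> 0" using that by simp
    ultimately show ?thesis by simp
  qed
  have hPhol: "(\<lambda>w. h (p + w\<^sup>2)) holomorphic_on (E - {0})"
  proof -
    have "(\<lambda>w. p + w\<^sup>2) holomorphic_on (E - {0})" by (intro holomorphic_intros)
    moreover have "(\<lambda>w. p + w\<^sup>2) ` (E - {0}) \<subseteq> ball p r - {p}" by (rule image_subsetI) (rule Phi_in)
    ultimately show ?thesis using holomorphic_on_compose_gen[OF _ h] by (simp add: o_def)
  qed
  have agreeW: "hh w = h (p + w\<^sup>2)" if "w \<in> W" for w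
  proof -
    have "h (p + w\<^sup>2) = T (complex_of_real \<alpha> * F (p + w\<^sup>2)) / csqrt (vv k (p + w\<^sup>2))"
      using hf[OF conjunct1[OF Wmap[OF that, unfolded \<rho>_def]]] .
    also have "\<dots> = hh w" by (simp only: hh_def FhW[OF that] csq[OF that] mult.assoc)
    finally show ?thesis by simp
  qed
  have Enz: "E \<noteq> {}" using w0W Wsub by auto
  have conn: "connected (E - {0})"
  proof -
    have "aff_dim E = 2" using aff_dim_open[OF Eopen Enz] by simp
    then show ?thesis using connected_punctured_convex[OF Econv, of 0] by simp
  qed
  have agree: "hh w = h (p + w\<^sup>2)" if "w \<in> E - {0}" for w
  proof (rule analytic_continuation_open[of W "E - {0}" hh "\<lambda>w. h (p + w\<^sup>2)"])
    show "open W" by (rule Wopen)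
    show "open (E - {0})" using Eopen by auto
    show "W \<noteq> {}" using w0W by auto
    show "W \<subseteq> E - {0}" using Wsub wnz by auto
    show "connected (E - {0})" by (rule conn)
    show "hh holomorphic_on E - {0}" by (rule hhhol)
    show "(\<lambda>w. h (p + w\<^sup>2)) holomorphic_on E - {0}" by (rule hPhol)
    show "\<And>z. z \<in> W \<Longrightarrow> hh z = h (p + z\<^sup>2)" by (rule agreeW)
    show "w \<in> E - {0}" by (rule that)
  qed
  define Z where "Z w = T (complex_of_real \<alpha> * Fh w) * S (- w) + T (complex_of_real \<alpha> * Fh (- w)) * S w" for w
  have Z0: "Z w = 0" if "w \<in> E - {0}" for w
  proof -
    have mw: "- w \<in> E - {0}" using that unfolding E_def by auto
    have "hh w = hh (- w)" using agree[OF that] agree[OF mw] by simp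
    then have "T (complex_of_real \<alpha> * Fh w) / (\<epsilon> * w * S w) = T (complex_of_real \<alpha> * Fh (- w)) / (\<epsilon> * (- w) * S (- w))"
      unfolding hh_def .
    then show ?thesis unfolding Z_def using that epsnz Snz[of w] Snz[of "-w"]
      by (simp add: field_simps)
  qed
  have Zhol: "Z holomorphic_on E"
  proof -
    have mE: "(\<lambda>w. - w) ` E \<subseteq> E" unfolding E_def by auto
    have h1: "(\<lambda>w. T (complex_of_real \<alpha> * Fh w)) holomorphic_on E"
    proof -
      have "(\<lambda>w. complex_of_real \<alpha> * Fh w) holomorphic_on E"
        by (intro holomorphic_intros Fhhol)
      from holomorphic_on_compose_gen[OF this T] show ?thesis by (simp add: o_def)
    qed
    have mh: "(\<lambda>w. - w) holomorphic_on E" by (intro holomorphic_intros)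
    have h2: "(\<lambda>w. T (complex_of_real \<alpha> * Fh (- w))) holomorphic_on E"
      using holomorphic_on_compose_gen[OF mh h1 mE] by (simp add: o_def)
    have h3: "(\<lambda>w. S (- w)) holomorphic_on E"
      using holomorphic_on_compose_gen[OF mh Shol mE] by (simp add: o_def)
    show ?thesis unfolding Z_def by (intro holomorphic_intros h1 h2 h3 Shol)
  qed
  have zE: "0 \<in> E" unfolding E_def using dpos by simp
  have cZ: "isCont Z 0"
    using holomorphic_on_imp_continuous_on[OF Zhol] continuous_on_eq_continuous_at[OF Eopen] zE by blast
  have ev: "eventually (\<lambda>w. Z w = 0) (at 0)"
    unfolding eventually_at using dpos
    by (intro exI[of _ \<delta>]) (auto intro!: Z0 simp: E_def dist_commute)
  have "((\<lambda>w::complex. 0::complex) \<longlongrightarrow> Z 0) (at 0)"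
    using Lim_transform_eventually[OF cZ[unfolded isCont_def] ev] .
  then have "Z 0 = 0" using LIM_const_eq by metis
  then have "2 * (T (complex_of_real \<alpha> * Fh 0) * S 0) = 0" unfolding Z_def by (simp add: mult.commute)
  then have "T (complex_of_real \<alpha> * Fh 0) = 0" using Snz[of 0] by simp
  then have "Im (complex_of_real \<alpha> * Fh 0) = 0" by (rule Tz)
  then have ImFh0: "Im (Fh 0) = 0" using al by simp
  obtain c where c: "0 < c" "\<And>t. \<rho> / 2 \<le> t \<Longrightarrow> t < \<rho> \<Longrightarrow>
      c \<le> \<sigma> * Im (F (complex_of_real (pi/2 + pi * real_of_int n) + \<i> * complex_of_real (\<sigma> * t)))"
    using vert_bound[OF k sg F Freal, of n] unfolding \<rho>_def by blast
  define ws where "ws s = complex_of_real (sqrt s / sqrt 2) * (1 - \<i> * complex_of_real \<sigma>)" for s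
  have ss: "\<sigma> * \<sigma> = 1" using sg by auto
  have ws2: "(ws s)\<^sup>2 = - \<i> * complex_of_real (\<sigma> * s)" if "0 \<le> s" for s
  proof -
    have "(ws s)\<^sup>2 = complex_of_real ((sqrt s / sqrt 2)\<^sup>2) * (1 - \<i> * complex_of_real \<sigma>)\<^sup>2"
      unfolding ws_def power_mult_distrib of_real_power ..
    also have "(sqrt s / sqrt 2)\<^sup>2 = s / 2" using that by (simp add: power_divide)
    also have "(1 - \<i> * complex_of_real \<sigma>)\<^sup>2 = - 2 * \<i> * complex_of_real \<sigma>"
      using ss by (simp add: power2_eq_square complex_eq_iff algebra_simps)
    finally show ?thesis by (simp add: algebra_simps)
  qed
  define s0 where "s0 = min (\<rho>/2) (\<delta>\<^sup>2)"
  have s0pos: "0 < s0" unfolding s0_def using rpos dpos by simp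
  have wsW: "ws s \<in> W" if "0 < s" "s < s0" for s
  proof -
    have "norm (1 - \<i> * complex_of_real \<sigma>) = sqrt 2" using sg by (auto simp: cmod_def)
    then have "norm (ws s) = sqrt s" unfolding ws_def norm_mult norm_of_real using that by simp
    moreover have "sqrt s < \<delta>" using that dpos unfolding s0_def
      by (metis min.strict_boundedE real_less_lsqrt less_eq_real_def)
    moreover have "0 < Re (ws s)" "\<sigma> * Im (ws s) < 0" unfolding ws_def using that sg by auto
    ultimately show ?thesis unfolding W_def E_def by simp
  qed
  have bound: "c \<le> \<sigma> * Im (Fh (ws s))" if "0 < s" "s < s0" for s
  proof -
    have "p + (ws s)\<^sup>2 = complex_of_real (pi/2 + pi * real_of_int n) + \<i> * complex_of_real (\<sigma> * (\<rho> - s))"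
      unfolding p ws2[OF less_imp_le[OF that(1)]] \<rho>_def by (simp add: algebra_simps)
    moreover have "\<rho> / 2 \<le> \<rho> - s" "\<rho> - s < \<rho>" using that unfolding s0_def by auto
    ultimately show ?thesis using c(2)[of "\<rho> - s"] FhW[OF wsW[OF that]] by simp
  qed
  have wslim: "(ws \<longlongrightarrow> 0) (at_right 0)"
  proof -
    have "((\<lambda>s. complex_of_real (sqrt s / sqrt 2) * (1 - \<i> * complex_of_real \<sigma>)) \<longlongrightarrow>
            complex_of_real (sqrt 0 / sqrt 2) * (1 - \<i> * complex_of_real \<sigma>)) (at_right 0)"
      by (intro tendsto_intros) auto
    then show ?thesis unfolding ws_def by simp
  qed
  have cFh: "isCont Fh 0"
    using holomorphic_on_imp_continuous_on[OF Fhhol] continuous_on_eq_continuous_at[OF Eopen] zE by blast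
  have "((\<lambda>s. \<sigma> * Im (Fh (ws s))) \<longlongrightarrow> \<sigma> * Im (Fh 0)) (at_right 0)"
    by (intro tendsto_intros isCont_tendsto_compose[OF cFh wslim])
  moreover have "eventually (\<lambda>s. c \<le> \<sigma> * Im (Fh (ws s))) (at_right 0)"
    unfolding eventually_at_right_field using s0pos
    by (intro exI[of _ s0]) (auto intro: bound)
  ultimately have "c \<le> \<sigma> * Im (Fh 0)"
    by (rule tendsto_lowerbound) simp
  then show False using c(1) ImFh0 by simp
qed



lemma cos_zero_Im: "cos (z::complex) = 0 \<Longrightarrow> Im z = 0"
proof -
  assume c: "cos z = 0"
  have "Re (cos z) = 0" "Im (cos z) = 0" using c by auto
  then have 1: "cos (Re z) * (exp (Im z) + exp (- Im z)) = 0"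
     and 2: "sin (Re z) * (exp (- Im z) - exp (Im z)) = 0" unfolding Re_cos Im_cos by auto
  have "exp (Im z) + exp (- Im z) > 0" by (simp add: add_pos_pos)
  then have "cos (Re z) = 0" using 1 by simp
  then have "sin (Re z) \<noteq> 0" using sin_cos_squared_add[of "Re z"] by auto
  then have "exp (- Im z) = exp (Im z)" using 2 by simp
  then show ?thesis by simp
qed

lemma sin_zero_Im: "sin (z::complex) = 0 \<Longrightarrow> Im z = 0"
proof -
  assume c: "sin z = 0"
  have "Re (sin z) = 0" "Im (sin z) = 0" using c by auto
  then have 1: "sin (Re z) * (exp (Im z) + exp (- Im z)) = 0"
     and 2: "cos (Re z) * (exp (Im z) - exp (- Im z)) = 0" unfolding Re_sin Im_sin by auto
  have "exp (Im z) + exp (- Im z) > 0" by (simp add: add_pos_pos)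
  then have "sin (Re z) = 0" using 1 by simp
  then have "cos (Re z) \<noteq> 0" using sin_cos_squared_add[of "Re z"] by auto
  then have "exp (- Im z) = exp (Im z)" using 2 by simp
  then show ?thesis by simp
qed

lemma ellK_pos:
  assumes "0 < k" "k < 1"
  shows "0 < ellK k"
proof -
  define h where "h t = 1 / sqrt (1 - k\<^sup>2 * (sin t)\<^sup>2)" for t
  have pos: "0 < 1 - k\<^sup>2 * (sin t)\<^sup>2" for t using integrand_real(2)[OF assms] .
  have ge1: "1 \<le> h t" for t
  proof -
    have "k\<^sup>2 * (sin t)\<^sup>2 \<ge> 0" by simp
    then have "sqrt (1 - k\<^sup>2 * (sin t)\<^sup>2) \<le> 1" using pos[of t] by simp
    then show ?thesis unfolding h_def using pos[of t] by (simp add: field_simps)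
  qed
  have contf: "continuous_on X h" for X
  proof -
    have "sqrt (1 - k\<^sup>2 * (sin t)\<^sup>2) \<noteq> 0" for t using pos[of t] by simp
    then show ?thesis unfolding h_def by (intro continuous_intros) auto
  qed
  have "(h has_integral integral {0..pi/2} h) {0..pi/2}"
    using integrable_continuous_interval[OF contf] by blast
  moreover have "((\<lambda>t. 1) has_integral (pi/2)) {0..pi/2}"
    using has_integral_const_real[of "1::real" 0 "pi/2"] by simp
  ultimately have "pi/2 \<le> integral {0..pi/2} h"
    using has_integral_le[of "\<lambda>t. 1" "pi/2" "{0..pi/2}" h] ge1 by blast
  then have "0 < integral {0..pi/2} h" using pi_gt_zero by linarith
  then show ?thesis unfolding ellK_def ellF_def h_def by simp
qed



theorem proposition4:
  fixes a b lam :: real and q :: nat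
  assumes "0 < b" and "b < a" and "3 \<le> q"
    and "0 < lam" and "lam < b" and "omega a b lam = 1 / real q"
  shows "\<exists>f g. f holomorphic_on strip (rho (k_lam a b lam))
           \<and> g holomorphic_on strip (rho (k_lam a b lam))
           \<and> (\<forall>x::real. f (complex_of_real x) = complex_of_real (cq (k_lam a b lam) q x))
           \<and> (\<forall>x::real. g (complex_of_real x) = complex_of_real (sq (k_lam a b lam) q x))
           \<and> (\<forall>(n::int) p. p \<in> {complex_of_real (pi / 2 + pi * real_of_int n) + \<i> * complex_of_real (rho (k_lam a b lam)),
                                complex_of_real (pi / 2 + pi * real_of_int n) - \<i> * complex_of_real (rho (k_lam a b lam))} \<longrightarrow>
                \<not> (\<exists>r>0. \<exists>h. h holomorphic_on (ball p r - {p})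
                         \<and> (\<forall>z\<in>ball p r \<inter> strip (rho (k_lam a b lam)). h z = f z))
              \<and> \<not> (\<exists>r>0. \<exists>h. h holomorphic_on (ball p r - {p})
                         \<and> (\<forall>z\<in>ball p r \<inter> strip (rho (k_lam a b lam)). h z = g z)))"
proof -
  define k where "k = k_lam a b lam"
  have k: "0 < k" "k < 1"
  proof -
    have "b\<^sup>2 < a\<^sup>2" using assms by (simp add: power_strict_mono)
    moreover have "lam\<^sup>2 < b\<^sup>2" using assms by (simp add: power_strict_mono)
    ultimately have "0 < (a\<^sup>2 - b\<^sup>2) / (a\<^sup>2 - lam\<^sup>2)" "(a\<^sup>2 - b\<^sup>2) / (a\<^sup>2 - lam\<^sup>2) < 1"
      by (auto simp: field_simps)
    then show "0 < k" "k < 1" unfolding k_def k_lam_def by (auto simp: real_sqrt_lt_1_iff)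
  qed
  have rho: "rho k = arcosh (1/k)" unfolding rho_def ..
  obtain F where F: "\<And>z. z \<in> strip (arcosh (1/k)) \<Longrightarrow> (F has_field_derivative 1 / csqrt (vv k z)) (at z)"
    and F0: "F 0 = 0" using primitive_exists[OF k] by blast
  have FR: "F (complex_of_real x) = complex_of_real (ellF k x)" for x
    using F_real[OF k F F0] .
  have Freal: "Im (F (complex_of_real x)) = 0" for x unfolding FR by simp
  define \<alpha> where "\<alpha> = 2 * pi * real q / (4 * ellK k)"
  have al: "\<alpha> \<noteq> 0" unfolding \<alpha>_def using ellK_pos[OF k] assms(3) by simp
  define f where "f z = cos (complex_of_real \<alpha> * F z) / csqrt (vv k z)" for z
  define g where "g z = sin (complex_of_real \<alpha> * F z) / csqrt (vv k z)" for z
  have nz: "vv k z \<notin> \<real>\<^sub>\<le>\<^sub>0" if "z \<in> strip (arcosh (1/k))" for z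
    using vv_strip[OF k] that by (auto simp: strip_def)
  have nz': "csqrt (vv k z) \<noteq> 0" if "z \<in> strip (arcosh (1/k))" for z
    using nz[OF that] by (metis csqrt_eq_0 nonpos_Reals_zero_I)
  have Fhol: "F holomorphic_on strip (arcosh (1/k))"
    unfolding holomorphic_on_open[OF open_strip] using F by blast
  have fhol: "f holomorphic_on strip (arcosh (1/k))" unfolding f_def
    by (intro holomorphic_intros Fhol holo_vv) (use nz nz' in auto)
  have ghol: "g holomorphic_on strip (arcosh (1/k))" unfolding g_def
    by (intro holomorphic_intros Fhol holo_vv) (use nz nz' in auto)
  have sq_real: "csqrt (vv k (complex_of_real x)) = complex_of_real (sqrt (1 - k\<^sup>2 * (sin x)\<^sup>2))" for x
    unfolding vv_real using integrand_real(2)[OF k, of x] by simp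
  have freal: "f (complex_of_real x) = complex_of_real (cq k q x)" for x
    unfolding f_def cq_def FR sq_real \<alpha>_def by (simp flip: cos_of_real)
  have greal: "g (complex_of_real x) = complex_of_real (sq k q x)" for x
    unfolding g_def sq_def FR sq_real \<alpha>_def by (simp flip: sin_of_real)
  have sing: False if "\<sigma> = 1 \<or> \<sigma> = -1"
      "p = complex_of_real (pi/2 + pi * real_of_int n) + \<i> * complex_of_real (\<sigma> * arcosh (1/k))"
      "0 < r" "h holomorphic_on (ball p r - {p})"
      "T = cos \<or> T = sin"
      "\<forall>z\<in>ball p r \<inter> strip (arcosh (1/k)). h z = T (complex_of_real \<alpha> * F z) / csqrt (vv k z)"
    for \<sigma> p n r h and T :: "complex \<Rightarrow> complex"
  proof (rule singular[where T=T, OF k that(1) al _ _ F Freal that(2,3,4)])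
    show "T holomorphic_on UNIV" using that(5) by (auto intro: holomorphic_intros)
    show "\<And>z. T z = 0 \<Longrightarrow> Im z = 0" using that(5) cos_zero_Im sin_zero_Im by auto
    show "\<And>z. z \<in> ball p r \<inter> strip (arcosh (1/k)) \<Longrightarrow> h z = T (complex_of_real \<alpha> * F z) / csqrt (vv k z)"
      using that(6) by blast
  qed
  show ?thesis unfolding k_def[symmetric] rho
  proof (rule exI[of _ f], rule exI[of _ g], intro conjI fhol ghol)
    show "\<forall>x. f (complex_of_real x) = complex_of_real (cq k q x)" using freal by blast
    show "\<forall>x. g (complex_of_real x) = complex_of_real (sq k q x)" using greal by blast
  next
    show "\<forall>(n::int) p. p \<in> {complex_of_real (pi / 2 + pi * real_of_int n) + \<i> * complex_of_real (arcosh (1/k)),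
                      complex_of_real (pi / 2 + pi * real_of_int n) - \<i> * complex_of_real (arcosh (1/k))} \<longrightarrow>
       \<not> (\<exists>r>0. \<exists>h. h holomorphic_on ball p r - {p} \<and> (\<forall>z\<in>ball p r \<inter> strip (arcosh (1/k)). h z = f z))
     \<and> \<not> (\<exists>r>0. \<exists>h. h holomorphic_on ball p r - {p} \<and> (\<forall>z\<in>ball p r \<inter> strip (arcosh (1/k)). h z = g z))"
  proof (intro allI impI conjI)
    fix n :: int and p
    assume pin: "p \<in> {complex_of_real (pi / 2 + pi * real_of_int n) + \<i> * complex_of_real (arcosh (1/k)),
                      complex_of_real (pi / 2 + pi * real_of_int n) - \<i> * complex_of_real (arcosh (1/k))}"
    obtain \<sigma> :: real where sg: "\<sigma> = 1 \<or> \<sigma> = -1"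
      and pe: "p = complex_of_real (pi/2 + pi * real_of_int n) + \<i> * complex_of_real (\<sigma> * arcosh (1/k))"
    proof (cases "p = complex_of_real (pi / 2 + pi * real_of_int n) + \<i> * complex_of_real (arcosh (1/k))")
      case True then show ?thesis using that[of 1] by simp
    next
      case False then show ?thesis using that[of "-1"] pin by simp
    qed
    show "\<not> (\<exists>r>0. \<exists>h. h holomorphic_on ball p r - {p} \<and> (\<forall>z\<in>ball p r \<inter> strip (arcosh (1/k)). h z = f z))"
      using sing[OF sg pe, of _ _ cos] unfolding f_def by blast
    show "\<not> (\<exists>r>0. \<exists>h. h holomorphic_on ball p r - {p} \<and> (\<forall>z\<in>ball p r \<inter> strip (arcosh (1/k)). h z = g z))"
      using sing[OF sg pe, of _ _ sin] unfolding g_def by blast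
  qed
  qed
qed

end
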